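(* Let $h,k:(0,\infty)\to(0,1]$ be increasing continuous functions with $h(t)\to 0$ and $k(t)\to0$ as $t\to0$, and let $\rho,\sigma>0$. Let $U\subseteq\mathbb{R}^n$ and $V\subseteq\mathbb{R}^m$ be bounded open sets. Suppose that $f:U\to\mathbb{R}$ has an $(h,\rho)$-almost analytic extension and that $g:V\to U$ (with $g(V)\subseteq U$) has a $(k,\sigma)$-almost analytic extension $G$. Then $f\circ g$ admits a $(\max\{h,k\},\max\{C\rho,\sigma\})$-almost analytic extension, where $C$ is the Lipschitz constant of the extension $G$ of $g$.
   Context: For a bounded open $U\subseteq\mathbb{R}^n$, an increasing continuous $h:(0,\infty)\to(0,1]$ tending to $0$ at $0$, and $\rho>0$, a function $f:U\to\mathbb{R}$ admits an $(h,\rho)$-almost analytic extension if there are $F\in C^1_c(\mathbb{C}^n)$ and a constant $C\ge1$ with $F|_U=f$ and $|\overline\partial F(z)|\le C\,h(\rho\, d(z,\overline U))$ for all $z\in\mathbb{C}^n$, where $d(z,\overline U)=\inf_{x\in\overline U}|x-z|$ and $\overline\partial F=(\partial F/\partial\overline z_1,\dots,\partial F/\partial\overline z_n)$. A vector-valued map $g=(g_1,\dots,g_n):V\to\mathbb{R}^n$ admits an $(h,\rho)$-almost analytic extension if each component does; its extension is $G=(G_1,\dots,G_n)\in C^1_c(\mathbb{C}^m,\mathbb{C}^n)$. The function $\max\{h,k\}$ is the pointwise maximum. *)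

theory Defs
  imports "HOL-Analysis.Analysis"
begin

definition cvec :: "real ^ 'n \<Rightarrow> complex ^ 'n" where
  "cvec x = (\<chi> i. complex_of_real (x $ i))"

definition C1c :: "(complex ^ 'n \<Rightarrow> complex) \<Rightarrow> bool" where
  "C1c F \<longleftrightarrow>
     (\<exists>F'. (\<forall>z. (F has_derivative blinfun_apply (F' z)) (at z)) \<and> continuous_on UNIV F') \<and>
     compact (closure {z. F z \<noteq> 0})"

text \<open>Wirtinger derivative dF/d(conj z_j) = (dF/dx_j + i dF/dy_j)/2.\<close>
definition dbar_comp :: "(complex ^ 'n \<Rightarrow> complex) \<Rightarrow> complex ^ 'n \<Rightarrow> 'n \<Rightarrow> complex" where
  "dbar_comp F z j =
     (frechet_derivative F (at z) (axis j 1) + \<i> * frechet_derivative F (at z) (axis j \<i>)) / 2"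

definition dbar :: "(complex ^ 'n \<Rightarrow> complex) \<Rightarrow> complex ^ 'n \<Rightarrow> complex ^ 'n" where
  "dbar F z = (\<chi> j. dbar_comp F z j)"

text \<open>(h,rho)-almost analytic extension F of f on U. The bound is required at points
  with positive distance to the closure of U (h is only defined on (0,infinity)).\<close>
definition almost_analytic_ext ::
  "(real \<Rightarrow> real) \<Rightarrow> real \<Rightarrow> (real ^ 'n) set \<Rightarrow> (real ^ 'n \<Rightarrow> real) \<Rightarrow> (complex ^ 'n \<Rightarrow> complex) \<Rightarrow> bool" where
  "almost_analytic_ext h \<rho> U f F \<longleftrightarrow>
     C1c F \<and> (\<forall>x\<in>U. F (cvec x) = complex_of_real (f x)) \<and>
     (\<exists>C\<ge>1. \<forall>z. infdist z (cvec ` closure U) > 0 \<longrightarrow>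
        norm (dbar F z) \<le> C * h (\<rho> * infdist z (cvec ` closure U)))"

definition has_almost_analytic_ext ::
  "(real \<Rightarrow> real) \<Rightarrow> real \<Rightarrow> (real ^ 'n) set \<Rightarrow> (real ^ 'n \<Rightarrow> real) \<Rightarrow> bool" where
  "has_almost_analytic_ext h \<rho> U f \<longleftrightarrow> (\<exists>F. almost_analytic_ext h \<rho> U f F)"

definition almost_analytic_ext_vec ::
  "(real \<Rightarrow> real) \<Rightarrow> real \<Rightarrow> (real ^ 'm) set \<Rightarrow> (real ^ 'm \<Rightarrow> real ^ 'n) \<Rightarrow> (complex ^ 'm \<Rightarrow> complex ^ 'n) \<Rightarrow> bool" where
  "almost_analytic_ext_vec k \<sigma> V g G \<longleftrightarrow>
     (\<forall>j. almost_analytic_ext k \<sigma> V (\<lambda>x. g x $ j) (\<lambda>z. G z $ j))"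

definition admissible_weight :: "(real \<Rightarrow> real) \<Rightarrow> bool" where
  "admissible_weight h \<longleftrightarrow>
     (\<forall>t>0. 0 < h t \<and> h t \<le> 1) \<and> mono_on {0<..} h \<and> continuous_on {0<..} h \<and>
     (h \<longlongrightarrow> 0) (at_right 0)"

end

theory Submission
  imports Defs
begin



lemma lip_deriv_bound:
  fixes f :: "'a::real_normed_vector \<Rightarrow> 'b::real_normed_vector"
  assumes d: "(f has_derivative f') (at z)" and l: "L-lipschitz_on UNIV f"
  shows "norm (f' v) \<le> L * norm v"
proof -
  have bl: "bounded_linear f'" using d by (simp add: has_derivative_bounded_linear)
  show ?thesis
  proof (cases "v = 0")
    case True
    then show ?thesis using bl by (simp add: linear_simps)
  next
    case False
  have L: "\<forall>x y. dist (f x) (f y) \<le> L * dist x y" using l by (auto simp: lipschitz_on_def)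
  show ?thesis
  proof (rule field_le_epsilon)
    fix e :: real assume e: "e > 0"
    define e' where "e' = e / norm v"
    have e': "e' > 0" using e False by (simp add: e'_def)
    obtain d where d0: "d > 0" and dd: "\<And>y. norm (y - z) < d \<Longrightarrow> norm (f y - f z - f' (y - z)) \<le> e' * norm (y - z)"
      using d e' unfolding has_derivative_at_alt by blast
    define t where "t = d / (2 * norm v)"
    have t: "t > 0" using d0 False by (simp add: t_def)
    have tn: "norm (t *\<^sub>R v) < d" using d0 False by (simp add: t_def)
    have a: "norm (f (z + t *\<^sub>R v) - f z - f' (t *\<^sub>R v)) \<le> e' * norm (t *\<^sub>R v)"
      using dd[of "z + t *\<^sub>R v"] tn by simp
    have b: "norm (f (z + t *\<^sub>R v) - f z) \<le> L * norm (t *\<^sub>R v)"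
      using L[rule_format, of "z + t *\<^sub>R v" z] by (simp add: dist_norm)
    have "f' (t *\<^sub>R v) = (f (z + t *\<^sub>R v) - f z) - (f (z + t *\<^sub>R v) - f z - f' (t *\<^sub>R v))" by simp
    hence "norm (f' (t *\<^sub>R v)) \<le> norm (f (z + t *\<^sub>R v) - f z) + norm (f (z + t *\<^sub>R v) - f z - f' (t *\<^sub>R v))"
      by (metis norm_triangle_ineq4)
    hence "norm (f' (t *\<^sub>R v)) \<le> L * norm (t *\<^sub>R v) + e' * norm (t *\<^sub>R v)"
      using a b by linarith
    hence "t * norm (f' v) \<le> t * (L * norm v + e)"
      using t False bl by (simp add: linear_simps e'_def algebra_simps)
    thus "norm (f' v) \<le> L * norm v + e" using t by simp
  qed
qed
qed



lemma vec_axis_decomp: "(x::complex^'n) = (\<Sum>j\<in>UNIV. axis j (x$j))"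
proof -
  have "(\<Sum>j\<in>UNIV. (x$j) *s axis j 1) = x" by (rule basis_expansion)
  moreover have "\<And>j. (x$j) *s axis j 1 = axis j (x$j)" by (simp add: vec_eq_iff axis_def)
  ultimately show ?thesis by simp
qed

lemma aux_cplx: fixes p x y :: complex
  shows "Re p *\<^sub>R x + Im p *\<^sub>R y + \<i> * (Re (\<i>*p) *\<^sub>R x + Im (\<i>*p) *\<^sub>R y) = cnj p * (x + \<i> * y)"
proof -
  have c: "cnj p = of_real (Re p) - \<i> * of_real (Im p)" by (simp add: complex_eq_iff)
  show ?thesis unfolding c by (simp add: scaleR_conv_of_real algebra_simps)
qed

lemma wirt_identity:
  fixes B :: "complex^'n \<Rightarrow> complex" and P :: "complex^'n"
  assumes lin: "linear B"
  shows "B P + \<i> * B (\<chi> j. \<i> * P$j) = (\<Sum>j\<in>UNIV. cnj (P$j) * (B (axis j 1) + \<i> * B (axis j \<i>)))"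
proof -
  have ax: "\<And>c j. axis j c = Re c *\<^sub>R axis j 1 + Im c *\<^sub>R (axis j \<i> :: complex^'n)"
    by (simp add: vec_eq_iff axis_def complex_eq_iff)
  have Bax: "\<And>c j. B (axis j c) = Re c *\<^sub>R B (axis j 1) + Im c *\<^sub>R B (axis j \<i>)"
    by (subst ax) (simp add: linear_add[OF lin] linear_scale[OF lin])
  have "B P = (\<Sum>j\<in>UNIV. B (axis j (P$j)))"
    by (subst vec_axis_decomp[of P]) (simp add: linear_sum[OF lin])
  moreover have "B (\<chi> j. \<i> * P$j) = (\<Sum>j\<in>UNIV. B (axis j (\<i> * P$j)))"
    by (subst vec_axis_decomp[of "\<chi> j. \<i> * P$j"]) (simp add: linear_sum[OF lin])
  ultimately have "B P + \<i> * B (\<chi> j. \<i> * P$j) = (\<Sum>j\<in>UNIV. B (axis j (P$j)) + \<i> * B (axis j (\<i> * P$j)))"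
    by (simp add: sum.distrib sum_distrib_left)
  also have "\<dots> = (\<Sum>j\<in>UNIV. cnj (P$j) * (B (axis j 1) + \<i> * B (axis j \<i>)))"
    apply (rule sum.cong, simp)
    subgoal for j
      using Bax[of j "P$j"] Bax[of j "\<i> * P$j"] aux_cplx[of "P$j" "B (axis j 1)" "B (axis j \<i>)"]
      by simp
    done
  finally show ?thesis .
qed



definition psi :: "real \<Rightarrow> real" where "psi s = (max 0 s)^2"

lemma psi_deriv: "(psi has_real_derivative (2 * max 0 x)) (at x)"
proof -
  consider "x > 0" | "x < 0" | "x = 0" by linarith
  then show ?thesis
  proof cases
    case 1
    have "((\<lambda>s. s^2) has_real_derivative (2 * x)) (at x)"
      by (auto intro!: derivative_eq_intros)
    then have "((\<lambda>s. s^2) has_real_derivative (2 * max 0 x)) (at x)" using 1 by simp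
    then show ?thesis
      by (rule has_field_derivative_transform_within_open[where S="{0<..}"]) (use 1 in \<open>auto simp: psi_def\<close>)
  next
    case 2
    have "((\<lambda>s. 0) has_real_derivative 0) (at x)" by simp
    then have "((\<lambda>s. 0) has_real_derivative (2 * max 0 x)) (at x)" using 2 by simp
    then show ?thesis
      by (rule has_field_derivative_transform_within_open[where S="{..<0}"]) (use 2 in \<open>auto simp: psi_def\<close>)
  next
    case 3
    have "((\<lambda>y. (psi y - psi 0) / (y - 0)) \<longlongrightarrow> 0) (at 0)"
    proof -
      have "((\<lambda>y. max 0 y) \<longlongrightarrow> max 0 0) (at (0::real))"
        by (intro tendsto_intros)
      moreover have "\<forall>\<^sub>F y in at (0::real). max 0 y = (psi y - psi 0) / (y - 0)"
        by (auto simp: psi_def eventually_at_filter power2_eq_square max_def)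
      ultimately show ?thesis by (simp add: tendsto_cong)
    qed
    then show ?thesis using 3 by (simp add: has_field_derivative_iff)
  qed
qed

lemma psi_cont: "continuous_on UNIV psi"
  unfolding psi_def by (intro continuous_intros)

lemma cutoff_real:
  fixes R :: real
  shows "\<exists>\<phi> \<phi>'. (\<forall>t. (\<phi> has_real_derivative \<phi>' t) (at t)) \<and> continuous_on UNIV \<phi>' \<and>
     (\<forall>t\<le>R. \<phi> t = 1 \<and> \<phi>' t = 0) \<and> (\<forall>t\<ge>R+1. \<phi> t = 0 \<and> \<phi>' t = 0)"
proof -
  define S where "S t = psi (R+1-t) + psi (t-R)" for t
  have Spos: "S t > 0" for t
  proof (cases "t \<le> R + 1/2")
    case True
    then have "psi (R+1-t) > 0" by (simp add: psi_def)
    moreover have "psi (t-R) \<ge> 0" by (simp add: psi_def)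
    ultimately show ?thesis by (simp add: S_def)
  next
    case False
    then have "psi (t-R) > 0" by (simp add: psi_def)
    moreover have "psi (R+1-t) \<ge> 0" by (simp add: psi_def)
    ultimately show ?thesis by (simp add: S_def)
  qed
  have Sne: "S t \<noteq> 0" for t using Spos[of t] by simp
  define \<phi> where "\<phi> t = psi (R+1-t) / S t" for t
  define \<phi>' where "\<phi>' t = ((- (2 * max 0 (R+1-t))) * S t - psi (R+1-t) * (- (2 * max 0 (R+1-t)) + 2 * max 0 (t-R))) / (S t)^2" for t
  have D: "(\<phi> has_real_derivative \<phi>' t) (at t)" for t
  proof -
    have a: "((\<lambda>t. psi (R+1-t)) has_real_derivative (2 * max 0 (R+1-t)) * (-1)) (at t)"
      by (rule DERIV_chain2[OF psi_deriv]) (auto intro!: derivative_eq_intros)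
    have b: "((\<lambda>t. psi (t-R)) has_real_derivative (2 * max 0 (t-R)) * 1) (at t)"
      by (rule DERIV_chain2[OF psi_deriv]) (auto intro!: derivative_eq_intros)
    have s: "(S has_real_derivative (2 * max 0 (R+1-t)) * (-1) + (2 * max 0 (t-R)) * 1) (at t)"
      unfolding S_def[abs_def] using DERIV_add[OF a b] by simp
    have "((\<lambda>t. psi (R+1-t) / S t) has_real_derivative
       ((2 * max 0 (R+1-t)) * (-1) * S t - psi (R+1-t) * ((2 * max 0 (R+1-t)) * (-1) + (2 * max 0 (t-R)) * 1)) / (S t * S t)) (at t)"
      by (rule DERIV_divide[OF a s]) (use Spos[of t] in simp)
    then show ?thesis unfolding \<phi>_def[abs_def] \<phi>'_def by (simp add: power2_eq_square)
  qed
  have C: "continuous_on UNIV \<phi>'"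
  proof -
    have cS: "continuous_on UNIV S" unfolding S_def[abs_def]
      by (intro continuous_intros continuous_on_compose2[OF psi_cont]) auto
    have cp: "continuous_on UNIV (\<lambda>t. psi (R+1-t))"
      by (intro continuous_intros continuous_on_compose2[OF psi_cont]) auto
    show ?thesis unfolding \<phi>'_def[abs_def]
      using Sne by (intro continuous_intros cS cp) simp
  qed
  have L: "\<phi> t = 1 \<and> \<phi>' t = 0" if "t \<le> R" for t
  proof -
    have "psi (t-R) = 0" "max 0 (t-R) = 0" using that by (auto simp: psi_def)
    moreover have "S t = psi (R+1-t)" using \<open>psi (t-R) = 0\<close> by (simp add: S_def)
    ultimately show ?thesis using Spos[of t] by (simp add: \<phi>_def \<phi>'_def)
  qed
  have Rr: "\<phi> t = 0 \<and> \<phi>' t = 0" if "t \<ge> R+1" for t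
  proof -
    have "psi (R+1-t) = 0" "max 0 (R+1-t) = 0" using that by (auto simp: psi_def)
    then show ?thesis by (simp add: \<phi>_def \<phi>'_def)
  qed
  show ?thesis
    apply (rule exI[of _ \<phi>], rule exI[of _ \<phi>'])
    using D C L Rr by blast
qed



lemma dbar_zero:
  fixes \<Phi> :: "complex^'n \<Rightarrow> complex^'n" and S :: "(complex^'n) set" and h :: "real \<Rightarrow> real"
  assumes adm: "admissible_weight h" and \<rho>: "\<rho> > 0" and C: "C \<ge> 0"
    and cont: "continuous_on UNIV \<Phi>"
    and bnd: "\<forall>w. infdist w S > 0 \<longrightarrow> norm (\<Phi> w) \<le> C * h (\<rho> * infdist w S)"
    and Sr: "\<forall>y\<in>S. \<forall>j. Im (y$j) = 0" and w: "w \<in> S"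
  shows "\<Phi> w = 0"
proof -
  define u :: "complex^'n" where "u = (\<chi> j. \<i>)"
  have "u $ undefined \<noteq> 0" by (simp add: u_def)
  hence "u \<noteq> 0" by auto
  hence nu: "norm u > 0" by simp
  have Sne: "S \<noteq> {}" using w by auto
  have lo: "t \<le> infdist (w + t *\<^sub>R u) S" if t: "t > 0" for t
  proof -
    have "t \<le> dist (w + t *\<^sub>R u) y" if y: "y \<in> S" for y
    proof -
      have "Im ((w + t *\<^sub>R u - y) $ undefined) = t"
        using Sr w y by (simp add: u_def)
      hence "t \<le> norm ((w + t *\<^sub>R u - y) $ undefined)"
        by (metis abs_Im_le_cmod abs_ge_self order_trans)
      also have "\<dots> \<le> norm (w + t *\<^sub>R u - y)" by (rule Finite_Cartesian_Product.norm_nth_le)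
      finally show ?thesis by (simp add: dist_norm)
    qed
    thus ?thesis unfolding infdist_notempty[OF Sne] by (intro cINF_greatest Sne) auto
  qed
  have up: "infdist (w + t *\<^sub>R u) S \<le> t * norm u" if t: "t > 0" for t
    using infdist_le[OF w, of "w + t *\<^sub>R u"] t by (simp add: dist_norm)
  have hmono: "mono_on {0<..} h" and hlim: "(h \<longlongrightarrow> 0) (at_right 0)"
    using adm by (auto simp: admissible_weight_def)
  have ev: "\<forall>\<^sub>F t in at_right 0. norm (\<Phi> (w + t *\<^sub>R u)) \<le> C * h (\<rho> * (t * norm u))"
    unfolding eventually_at_right_less
  proof -
    show "\<forall>\<^sub>F t in at_right 0. norm (\<Phi> (w + t *\<^sub>R u)) \<le> C * h (\<rho> * (t * norm u))"
      unfolding eventually_at_filter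
    proof (intro always_eventually allI impI)
      fix t :: real assume "t \<noteq> 0" "t \<in> {0<..}"
      hence t: "t > 0" by simp
      have ip: "infdist (w + t *\<^sub>R u) S > 0" using lo[OF t] t by linarith
      have "norm (\<Phi> (w + t *\<^sub>R u)) \<le> C * h (\<rho> * infdist (w + t *\<^sub>R u) S)"
        using bnd ip by blast
      also have "\<dots> \<le> C * h (\<rho> * (t * norm u))"
        apply (rule mult_left_mono[OF _ C])
        apply (rule mono_onD[OF hmono])
        using ip \<rho> t nu up[OF t] by (auto intro: mult_left_mono)
      finally show "norm (\<Phi> (w + t *\<^sub>R u)) \<le> C * h (\<rho> * (t * norm u))" .
    qed
  qed
  have l1: "((\<lambda>t. norm (\<Phi> (w + t *\<^sub>R u))) \<longlongrightarrow> norm (\<Phi> w)) (at_right 0)"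
  proof -
    have "((\<lambda>t. w + t *\<^sub>R u) \<longlongrightarrow> w + 0 *\<^sub>R u) (at_right 0)"
      by (intro tendsto_intros)
    hence "((\<lambda>t. w + t *\<^sub>R u) \<longlongrightarrow> w) (at_right 0)" by simp
    moreover have "isCont \<Phi> w" using cont by (simp add: continuous_on_eq_continuous_at)
    ultimately show ?thesis by (intro tendsto_norm isCont_tendsto_compose[of w \<Phi>])
  qed
  have l2: "((\<lambda>t. C * h (\<rho> * (t * norm u))) \<longlongrightarrow> C * 0) (at_right 0)"
  proof -
    have "filterlim (\<lambda>t. \<rho> * (t * norm u)) (at_right 0) (at_right (0::real))"
    proof (rule tendsto_imp_filterlim_at_right)
      have "((\<lambda>t. \<rho> * (t * norm u)) \<longlongrightarrow> \<rho> * (0 * norm u)) (at_right (0::real))"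
        by (intro tendsto_intros)
      thus "((\<lambda>t. \<rho> * (t * norm u)) \<longlongrightarrow> 0) (at_right (0::real))" by simp
      show "\<forall>\<^sub>F x in at_right 0. 0 < \<rho> * (x * norm u)"
        unfolding eventually_at_filter using \<rho> nu by (auto intro!: always_eventually)
    qed
    from filterlim_compose[OF hlim this] show ?thesis by (intro tendsto_intros) simp
  qed
  have "norm (\<Phi> w) \<le> C * 0"
    by (rule tendsto_le[OF trivial_limit_at_right_real l2 l1 ev])
  thus ?thesis by simp
qed


lemma dbar_formula:
  assumes "(F has_derivative blinfun_apply D) (at w)"
  shows "dbar F w = (\<chi> j. (D (axis j 1) + \<i> * D (axis j \<i>)) / 2)"
  by (simp add: dbar_def dbar_comp_def frechet_derivative_at[OF assms, symmetric])

lemma dbar_comp_formula: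
  assumes "(F has_derivative D) (at w)"
  shows "dbar_comp F w j = (D (axis j 1) + \<i> * D (axis j \<i>)) / 2"
  by (simp add: dbar_comp_def frechet_derivative_at[OF assms, symmetric])

lemma cvec_nth[simp]: "cvec x $ j = complex_of_real (x $ j)"
  by (simp add: cvec_def)

lemma cvec_cont: "continuous_on UNIV cvec"
  unfolding cvec_def by (intro continuous_intros)

lemma norm_vec_le_sum: "norm (x::complex^'n) \<le> (\<Sum>j\<in>UNIV. norm (x$j))"
  by (simp add: norm_vec_def L2_set_le_sum)

lemma dbar_cont:
  assumes "\<forall>w. (F has_derivative blinfun_apply (DF w)) (at w)" "continuous_on UNIV DF"
  shows "continuous_on UNIV (dbar F)"
proof -
  have "dbar F = (\<lambda>w. \<chi> j. (DF w (axis j 1) + \<i> * DF w (axis j \<i>)) / 2)"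
    using assms(1) by (auto simp: dbar_formula)
  moreover have "continuous_on UNIV (\<lambda>w. \<chi> j. (DF w (axis j 1) + \<i> * DF w (axis j \<i>)) / 2)"
    by (intro continuous_on_vec_lambda continuous_intros assms(2)) auto
  ultimately show ?thesis by simp
qed

lemma norm_axis_c: "norm (axis i (c::complex) :: complex^'m) = norm c"
proof -
  have "(\<Sum>j\<in>UNIV. (norm (axis i c $ j))\<^sup>2) = (\<Sum>j\<in>UNIV. if j = i then (norm c)\<^sup>2 else 0)"
    by (rule sum.cong) (auto simp: axis_def)
  also have "\<dots> = (norm c)\<^sup>2" by simp
  finally show ?thesis by (simp add: norm_vec_def L2_set_def)
qed



lemma comp_bound:
  fixes B :: "(complex^('n::finite)) \<Rightarrow>\<^sub>L complex" and P Q Df Dg :: "complex^'n"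
  assumes hf: "\<And>j. B (axis j 1) + \<i> * B (axis j \<i>) = 2 * Df$j"
    and hg: "\<And>j. Q$j - \<i> * P$j = - 2 * \<i> * Dg$j"
  shows "norm ((B P + \<i> * B Q) / 2) \<le> real CARD('n) * norm P * norm Df + norm B * (\<Sum>j\<in>UNIV. norm (Dg$j))"
proof -
  define W where "W = Q - (\<chi> j. \<i> * P$j)"
  have lin: "linear (blinfun_apply B)" by (simp add: blinfun.bounded_linear_right bounded_linear.linear)
  have "B Q = B (\<chi> j. \<i> * P$j) + B W" unfolding W_def by (simp add: blinfun.diff_right)
  hence "B P + \<i> * B Q = (B P + \<i> * B (\<chi> j. \<i> * P$j)) + \<i> * B W" by (simp add: algebra_simps)
  also have "B P + \<i> * B (\<chi> j. \<i> * P$j) = (\<Sum>j\<in>UNIV. cnj (P$j) * (2 * Df$j))"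
    using wirt_identity[OF lin, of P] hf by simp
  finally have eq: "B P + \<i> * B Q = (\<Sum>j\<in>UNIV. cnj (P$j) * (2 * Df$j)) + \<i> * B W" .
  have n1: "norm (\<Sum>j\<in>UNIV. cnj (P$j) * (2 * Df$j)) \<le> 2 * (real CARD('n) * norm P * norm Df)"
  proof -
    have "norm (\<Sum>j\<in>UNIV. cnj (P$j) * (2 * Df$j)) \<le> (\<Sum>j\<in>UNIV. norm (cnj (P$j) * (2 * Df$j)))"
      by (rule norm_sum)
    also have "\<dots> \<le> (\<Sum>j\<in>(UNIV::'n set). 2 * (norm P * norm Df))"
    proof (rule sum_mono)
      fix j :: 'n
      have "norm (cnj (P$j) * (2 * Df$j)) = 2 * (norm (P$j) * norm (Df$j))" by (simp add: norm_mult)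
      also have "\<dots> \<le> 2 * (norm P * norm Df)"
        by (intro mult_left_mono mult_mono Finite_Cartesian_Product.norm_nth_le) auto
      finally show "norm (cnj (P$j) * (2 * Df$j)) \<le> 2 * (norm P * norm Df)" .
    qed
    also have "\<dots> = 2 * (real CARD('n) * norm P * norm Df)" by simp
    finally show ?thesis .
  qed
  have n2: "norm W \<le> 2 * (\<Sum>j\<in>UNIV. norm (Dg$j))"
  proof -
    have "norm W \<le> (\<Sum>j\<in>UNIV. norm (W$j))" by (rule norm_vec_le_sum)
    also have "\<dots> = (\<Sum>j\<in>UNIV. 2 * norm (Dg$j))"
      by (rule sum.cong) (auto simp: W_def hg norm_mult)
    finally show ?thesis by (simp add: sum_distrib_left)
  qed
  have "norm (B P + \<i> * B Q) \<le> 2 * (real CARD('n) * norm P * norm Df) + norm B * (2 * (\<Sum>j\<in>UNIV. norm (Dg$j)))"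
  proof -
    have "norm (B P + \<i> * B Q) \<le> norm (\<Sum>j\<in>UNIV. cnj (P$j) * (2 * Df$j)) + norm (\<i> * B W)"
      unfolding eq by (rule norm_triangle_ineq)
    also have "norm (\<i> * B W) \<le> norm B * norm W" by (simp add: norm_mult norm_blinfun)
    also have "norm B * norm W \<le> norm B * (2 * (\<Sum>j\<in>UNIV. norm (Dg$j)))"
      by (intro mult_left_mono n2) auto
    finally show ?thesis using n1 by linarith
  qed
  thus ?thesis by (simp add: field_simps)
qed



theorem proposition1p1:
  fixes h k :: "real \<Rightarrow> real" and \<rho> \<sigma> L :: real
    and U :: "(real ^ 'n) set" and V :: "(real ^ 'm) set"
    and f :: "real ^ 'n \<Rightarrow> real" and g :: "real ^ 'm \<Rightarrow> real ^ 'n"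
    and G :: "complex ^ 'm \<Rightarrow> complex ^ 'n"
  assumes "admissible_weight h" and "admissible_weight k"
    and "\<rho> > 0" and "\<sigma> > 0"
    and "bounded U" and "open U" and "bounded V" and "open V"
    and "has_almost_analytic_ext h \<rho> U f"
    and "\<forall>x\<in>V. g x \<in> U"
    and "almost_analytic_ext_vec k \<sigma> V g G"
    and "L-lipschitz_on UNIV G"
  shows "has_almost_analytic_ext (\<lambda>t. max (h t) (k t)) (max (L * \<rho>) \<sigma>) V (f \<circ> g)"
proof -
  note admh = assms(1) and admk = assms(2) and \<rho> = assms(3) and \<sigma> = assms(4)
  note gU = assms(10) and lip = assms(12)
  have hpos: "\<And>t. t > 0 \<Longrightarrow> 0 < h t" and hmono: "mono_on {0<..} h"
    using admh by (auto simp: admissible_weight_def)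
  have kpos: "\<And>t. t > 0 \<Longrightarrow> 0 < k t" and kmono: "mono_on {0<..} k"
    using admk by (auto simp: admissible_weight_def)
  have L0: "L \<ge> 0" using lip by (auto simp: lipschitz_on_def)
  have Lip: "\<And>x y. dist (G x) (G y) \<le> L * dist x y" using lip by (auto simp: lipschitz_on_def)
  have cG: "continuous_on UNIV G" using lip by (rule lipschitz_on_continuous_on)
  define Ucl where "Ucl = cvec ` closure U"
  define Vcl where "Vcl = cvec ` closure V"
  have cUcl: "compact Ucl" unfolding Ucl_def
    using assms(5) by (intro compact_continuous_image continuous_on_subset[OF cvec_cont]) (auto simp: compact_closure)
  have cVcl: "compact Vcl" unfolding Vcl_def
    using assms(7) by (intro compact_continuous_image continuous_on_subset[OF cvec_cont]) (auto simp: compact_closure)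
  obtain F where aF: "almost_analytic_ext h \<rho> U f F"
    using assms(9) by (auto simp: has_almost_analytic_ext_def)
  obtain DF where DF: "\<And>w. (F has_derivative blinfun_apply (DF w)) (at w)" and cDF: "continuous_on UNIV DF"
    using aF by (auto simp: almost_analytic_ext_def C1c_def)
  have Fext: "\<And>x. x \<in> U \<Longrightarrow> F (cvec x) = complex_of_real (f x)"
    using aF by (auto simp: almost_analytic_ext_def)
  obtain CF where CF1: "CF \<ge> 1" and CF: "\<And>w. infdist w Ucl > 0 \<Longrightarrow> norm (dbar F w) \<le> CF * h (\<rho> * infdist w Ucl)"
    using aF unfolding almost_analytic_ext_def Ucl_def by blast
  have cF: "continuous_on UNIV F"
    using DF by (meson continuous_at_imp_continuous_on has_derivative_continuous)
  have "\<forall>j. \<exists>D C. (\<forall>z. ((\<lambda>z. G z $ j) has_derivative blinfun_apply (D z)) (at z)) \<and> continuous_on UNIV D \<and>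
      (\<forall>x\<in>V. G (cvec x) $ j = complex_of_real (g x $ j)) \<and> C \<ge> 1 \<and>
      (\<forall>z. infdist z Vcl > 0 \<longrightarrow> norm (dbar (\<lambda>z. G z $ j) z) \<le> C * k (\<sigma> * infdist z Vcl))"
  proof
    fix j
    have "almost_analytic_ext k \<sigma> V (\<lambda>x. g x $ j) (\<lambda>z. G z $ j)"
      using assms(11) by (simp add: almost_analytic_ext_vec_def)
    thus "\<exists>D C. (\<forall>z. ((\<lambda>z. G z $ j) has_derivative blinfun_apply (D z)) (at z)) \<and> continuous_on UNIV D \<and>
      (\<forall>x\<in>V. G (cvec x) $ j = complex_of_real (g x $ j)) \<and> C \<ge> 1 \<and>
      (\<forall>z. infdist z Vcl > 0 \<longrightarrow> norm (dbar (\<lambda>z. G z $ j) z) \<le> C * k (\<sigma> * infdist z Vcl))"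
      unfolding almost_analytic_ext_def C1c_def Vcl_def by blast
  qed
  then obtain DG CGj where DG: "\<And>j z. ((\<lambda>z. G z $ j) has_derivative blinfun_apply (DG j z)) (at z)"
    and cDG: "\<And>j. continuous_on UNIV (DG j)"
    and Gext: "\<And>j x. x \<in> V \<Longrightarrow> G (cvec x) $ j = complex_of_real (g x $ j)"
    and CGj1: "\<And>j. CGj j \<ge> 1"
    and CGj: "\<And>j z. infdist z Vcl > 0 \<Longrightarrow> norm (dbar (\<lambda>z. G z $ j) z) \<le> CGj j * k (\<sigma> * infdist z Vcl)"
    by metis
  define A where "A z v = (\<chi> j. DG j z v)" for z v
  have Gder: "(G has_derivative A z) (at z)" for z
  proof -
    have "((\<lambda>x. G x \<bullet> b) has_derivative (\<lambda>v. A z v \<bullet> b)) (at z)" if b: "b \<in> Basis" for b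
    proof -
      obtain i u where iu: "b = axis i u" "u \<in> Basis" using b by (auto simp: Basis_vec_def)
      have "((\<lambda>x. G x $ i \<bullet> u) has_derivative (\<lambda>v. DG i z v \<bullet> u)) (at z)"
        by (rule bounded_linear.has_derivative[OF bounded_linear_inner_left DG])
      thus ?thesis using iu by (simp add: inner_axis A_def)
    qed
    thus ?thesis by (subst has_derivative_componentwise_within) blast
  qed
  have Gcl: "G ` Vcl \<subseteq> Ucl"
  proof -
    have "(G \<circ> cvec) ` closure V \<subseteq> Ucl"
    proof (rule image_closure_subset)
      show "continuous_on (closure V) (G \<circ> cvec)"
        by (intro continuous_on_compose continuous_on_subset[OF cvec_cont] continuous_on_subset[OF cG]) auto
      show "closed Ucl" using cUcl by (rule compact_imp_closed)
      show "(G \<circ> cvec) ` V \<subseteq> Ucl"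
      proof
        fix y assume "y \<in> (G \<circ> cvec) ` V"
        then obtain x where x: "x \<in> V" "y = G (cvec x)" by auto
        have "G (cvec x) = cvec (g x)" using Gext[OF x(1)] by (simp add: vec_eq_iff)
        thus "y \<in> Ucl" using x gU by (auto simp: Ucl_def intro: closure_subset[THEN subsetD])
      qed
    qed
    thus ?thesis by (auto simp: Vcl_def)
  qed
  obtain r0 where r0: "r0 \<ge> 0" "\<And>y. y \<in> Vcl \<Longrightarrow> norm y \<le> r0"
    using compact_imp_bounded[OF cVcl] by (metis bounded_pos less_eq_real_def)
  define R where "R = (r0 + 1)^2"
  obtain \<phi> \<phi>' where \<phi>der: "\<And>t. (\<phi> has_real_derivative \<phi>' t) (at t)" and c\<phi>': "continuous_on UNIV \<phi>'"
    and \<phi>1: "\<And>t. t \<le> R \<Longrightarrow> \<phi> t = 1 \<and> \<phi>' t = 0" and \<phi>0: "\<And>t. t \<ge> R + 1 \<Longrightarrow> \<phi> t = 0 \<and> \<phi>' t = 0"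
    using cutoff_real[of R] by blast
  have c\<phi>: "continuous_on UNIV \<phi>"
    using \<phi>der by (meson DERIV_isCont continuous_at_imp_continuous_on)
  define H where "H z = complex_of_real (\<phi> (z \<bullet> z)) * F (G z)" for z
  define DH where "DH z v = complex_of_real ((z \<bullet> v + v \<bullet> z) * \<phi>' (z \<bullet> z)) * F (G z)
      + complex_of_real (\<phi> (z \<bullet> z)) * DF (G z) (A z v)" for z v
  have Hder: "(H has_derivative DH z) (at z)" for z
  proof -
    have c: "((\<lambda>z. \<phi> (z \<bullet> z)) has_derivative (\<lambda>v. (z \<bullet> v + v \<bullet> z) * \<phi>' (z \<bullet> z))) (at z)"
      by (rule DERIV_compose_FDERIV[OF \<phi>der has_derivative_inner[OF has_derivative_ident has_derivative_ident]])
    have fg: "((\<lambda>z. F (G z)) has_derivative (\<lambda>v. DF (G z) (A z v))) (at z)"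
      by (rule has_derivative_compose[OF Gder DF])
    have "(H has_derivative (\<lambda>v. complex_of_real (\<phi> (z \<bullet> z)) * DF (G z) (A z v) + complex_of_real ((z \<bullet> v + v \<bullet> z) * \<phi>' (z \<bullet> z)) * F (G z))) (at z)"
      unfolding H_def[abs_def] by (rule has_derivative_mult[OF has_derivative_of_real[OF c] fg])
    thus ?thesis by (simp add: DH_def[abs_def] add.commute)
  qed
  have blDH: "bounded_linear (DH z)" for z using Hder[of z] by (rule has_derivative_bounded_linear)
  define DH' where "DH' z = Blinfun (DH z)" for z
  have DH'a: "blinfun_apply (DH' z) = DH z" for z
    unfolding DH'_def using blDH by (simp add: bounded_linear_Blinfun_apply)
  have cFG: "continuous_on UNIV (\<lambda>z. F (G z))"
    by (rule continuous_on_compose2[OF cF cG]) auto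
  have cDFG: "continuous_on UNIV (\<lambda>z. DF (G z))"
    by (rule continuous_on_compose2[OF cDF cG]) auto
  have cA: "continuous_on UNIV (\<lambda>z. A z b)" for b
    unfolding A_def by (intro continuous_on_vec_lambda continuous_intros cDG)
  have cDHb: "continuous_on UNIV (\<lambda>z. DH z b)" for b
    unfolding DH_def
    by (intro continuous_intros cFG cDFG cA continuous_on_compose2[OF c\<phi>'] continuous_on_compose2[OF c\<phi>]) auto
  have cDH': "continuous_on UNIV DH'"
    by (rule continuous_on_blinfun_componentwise) (simp add: DH'a cDHb)
  have Hzero: "H z = 0 \<and> DH z = (\<lambda>v. 0)" if "z \<bullet> z \<ge> R + 1" for z
    using \<phi>0[OF that] by (auto simp: H_def DH_def)
  define s where "s = sqrt (R + 1)"
  have outside: "norm z \<le> s" if "z \<bullet> z < R + 1" for z :: "complex^'m"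
    using that unfolding s_def by (metis inner_ge_zero less_eq_real_def norm_eq_sqrt_inner real_sqrt_le_mono)
  have C1: "C1c H"
  proof -
    have "{z. H z \<noteq> 0} \<subseteq> cball 0 s"
    proof
      fix z assume "z \<in> {z. H z \<noteq> 0}"
      hence "z \<bullet> z < R + 1" using Hzero by force
      thus "z \<in> cball 0 s" using outside by simp
    qed
    hence "bounded {z. H z \<noteq> 0}" by (rule bounded_subset[OF bounded_cball])
    hence "compact (closure {z. H z \<noteq> 0})" by (simp add: compact_closure)
    moreover have "\<forall>z. (H has_derivative blinfun_apply (DH' z)) (at z)" using Hder DH'a by simp
    ultimately show ?thesis unfolding C1c_def using cDH' by blast
  qed
  have Hext: "H (cvec x) = complex_of_real ((f \<circ> g) x)" if x: "x \<in> V" for x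
  proof -
    have "cvec x \<in> Vcl" using x by (auto simp: Vcl_def intro: closure_subset[THEN subsetD])
    hence "norm (cvec x) \<le> r0" by (rule r0(2))
    hence "norm (cvec x) ^ 2 \<le> R" unfolding R_def using r0(1)
      using power_mono[of "norm (cvec x)" r0 2] by simp
    hence "cvec x \<bullet> cvec x \<le> R" by (simp add: power2_norm_eq_inner)
    hence "\<phi> (cvec x \<bullet> cvec x) = 1" using \<phi>1 by blast
    moreover have "G (cvec x) = cvec (g x)" using Gext[OF x] by (simp add: vec_eq_iff)
    ultimately show ?thesis using Fext[OF gU[rule_format, OF x]] by (simp add: H_def)
  qed
  have Bound: "\<exists>C\<ge>1. \<forall>z. infdist z (cvec ` closure V) > 0 \<longrightarrow>
        norm (dbar H z) \<le> C * max (h (max (L * \<rho>) \<sigma> * infdist z (cvec ` closure V))) (k (max (L * \<rho>) \<sigma> * infdist z (cvec ` closure V)))"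
  proof -
    define K where "K t = max (h t) (k t)" for t
    define \<rho>' where "\<rho>' = max (L * \<rho>) \<sigma>"
    have \<rho>': "\<rho>' > 0" "L * \<rho> \<le> \<rho>'" "\<sigma> \<le> \<rho>'" using \<sigma> by (auto simp: \<rho>'_def)
    have Kpos: "K t > 0" if "t > 0" for t using hpos[OF that] by (simp add: K_def)
    have Kmono: "K a \<le> K b" if "0 < a" "a \<le> b" for a b
      using mono_onD[OF hmono, of a b] mono_onD[OF kmono, of a b] that by (auto simp: K_def)
    define nn where "nn = real CARD('n)"
    define mm where "mm = real CARD('m)"
    define CG where "CG = (\<Sum>j\<in>UNIV. CGj j)"
    have CG0: "CG \<ge> 0" unfolding CG_def using CGj1 by (meson order_trans sum_nonneg zero_le_one)
    obtain MB where MB0: "MB \<ge> 0" and MB: "\<And>z. z \<in> cball 0 s \<Longrightarrow> norm (DF (G z)) \<le> MB"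
    proof -
      have "compact ((\<lambda>z. DF (G z)) ` cball 0 s)"
        by (intro compact_continuous_image continuous_on_subset[OF cDFG]) auto
      then obtain M where "M > 0" "\<forall>x\<in>(\<lambda>z. DF (G z)) ` cball 0 s. norm x \<le> M"
        by (meson compact_imp_bounded bounded_pos)
      thus ?thesis using that[of M] by auto
    qed
    define \<Phi> where "\<Phi> z = (\<chi> j. (DH z (axis j 1) + \<i> * DH z (axis j \<i>)) / 2)" for z
    have dH: "dbar H z = \<Phi> z" for z
      using Hder[of z] unfolding \<Phi>_def by (simp add: dbar_def dbar_comp_formula)
    obtain M where M0: "M \<ge> 0" and M: "\<And>z. norm (dbar H z) \<le> M"
    proof -
      have c\<Phi>: "continuous_on UNIV \<Phi>" unfolding \<Phi>_def
        by (intro continuous_on_vec_lambda continuous_intros cDHb) auto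
      have "compact (\<Phi> ` cball 0 s)"
        by (intro compact_continuous_image continuous_on_subset[OF c\<Phi>]) auto
      then obtain M where M: "M > 0" "\<forall>x\<in>\<Phi> ` cball 0 s. norm x \<le> M"
        by (meson compact_imp_bounded bounded_pos)
      have "norm (dbar H z) \<le> M" for z
      proof (cases "z \<in> cball 0 s")
        case True thus ?thesis using M dH by auto
      next
        case False
        hence "norm z > s" by simp
        hence "norm z ^ 2 > s ^ 2" using power_strict_mono[of s "norm z" 2] s_def R_def by simp
        hence "z \<bullet> z \<ge> R + 1" unfolding s_def using r0(1) R_def
          by (simp add: power2_norm_eq_inner)
        hence "\<Phi> z = 0" using Hzero[of z] by (simp add: \<Phi>_def vec_eq_iff)
        thus ?thesis using dH M by simp
      qed
      thus ?thesis using that[of M] M by auto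
    qed
    define C where "C = max 1 (max (M / K \<rho>') (mm * (nn * L * CF + MB * CG)))"
    have "\<forall>z. infdist z Vcl > 0 \<longrightarrow> norm (dbar H z) \<le> C * K (\<rho>' * infdist z Vcl)"
    proof (intro allI impI)
      fix z assume dpos: "infdist z Vcl > 0"
      define \<delta> where "\<delta> = infdist z Vcl"
      have \<delta>: "\<delta> > 0" using dpos by (simp add: \<delta>_def)
      have Vne: "Vcl \<noteq> {}" using dpos by (auto simp: infdist_def)
      have KK: "K (\<rho>' * \<delta>) > 0" using Kpos \<rho>' \<delta> by simp
      show "norm (dbar H z) \<le> C * K (\<rho>' * infdist z Vcl)"
      proof (cases "\<delta> \<ge> 1")
        case True
        have "K \<rho>' \<le> K (\<rho>' * \<delta>)" using Kmono[of \<rho>' "\<rho>' * \<delta>"] \<rho>' True by simp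
        have "norm (dbar H z) \<le> M" by (rule M)
        also have "M = (M / K \<rho>') * K \<rho>'" using Kpos[OF \<rho>'(1)] by simp
        also have "\<dots> \<le> C * K (\<rho>' * \<delta>)"
          by (intro mult_mono) (use \<open>K \<rho>' \<le> K (\<rho>' * \<delta>)\<close> Kpos[OF \<rho>'(1)] M0 in \<open>auto simp: C_def\<close>)
        finally show ?thesis by (simp add: \<delta>_def)
      next
        case False
        hence \<delta>1: "\<delta> < 1" by simp
        obtain y where y: "y \<in> Vcl" "infdist z Vcl = dist z y"
          using infdist_attains_inf[OF compact_imp_closed[OF cVcl] Vne] by blast
        have nz: "norm z < r0 + 1"
        proof -
          have "norm z \<le> norm y + norm (z - y)" by (metis add.commute diff_add_cancel norm_triangle_ineq)
          also have "norm (z - y) = \<delta>" using y by (simp add: \<delta>_def dist_norm)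
          finally show ?thesis using r0(2)[OF y(1)] \<delta>1 by linarith
        qed
        have zz: "z \<bullet> z < R"
        proof -
          have "norm z ^ 2 < (r0 + 1) ^ 2" using power_strict_mono[of "norm z" "r0 + 1" 2] nz by simp
          thus ?thesis by (simp add: R_def power2_norm_eq_inner)
        qed
        have zs: "z \<in> cball 0 s" using outside[of z] zz by simp
        have \<phi>z: "\<phi> (z \<bullet> z) = 1" "\<phi>' (z \<bullet> z) = 0" using \<phi>1[of "z \<bullet> z"] zz by auto
        have DHz: "DH z v = DF (G z) (A z v)" for v by (simp add: DH_def \<phi>z)
        define B where "B = DF (G z)"
        have Df: "B (axis j 1) + \<i> * B (axis j \<i>) = 2 * dbar F (G z) $ j" for j
          by (simp add: B_def dbar_formula[OF DF])
        have LF: "L * norm (dbar F (G z)) \<le> L * CF * h (\<rho>' * \<delta>)"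
        proof (cases "L = 0")
          case True thus ?thesis by simp
        next
          case False
          hence Lp: "L > 0" using L0 by simp
          have Gy: "G y \<in> Ucl" using Gcl y(1) by auto
          have idw: "infdist (G z) Ucl \<le> L * \<delta>"
          proof -
            have "infdist (G z) Ucl \<le> dist (G z) (G y)" by (rule infdist_le[OF Gy])
            also have "\<dots> \<le> L * dist z y" by (rule Lip)
            finally show ?thesis using y by (simp add: \<delta>_def)
          qed
          have "norm (dbar F (G z)) \<le> CF * h (\<rho>' * \<delta>)"
          proof (cases "infdist (G z) Ucl > 0")
            case True
            have "norm (dbar F (G z)) \<le> CF * h (\<rho> * infdist (G z) Ucl)" by (rule CF[OF True])
            also have "\<dots> \<le> CF * h (\<rho>' * \<delta>)"
            proof (rule mult_left_mono)
              have "\<rho> * infdist (G z) Ucl \<le> \<rho> * (L * \<delta>)" using idw \<rho> by (simp add: mult_left_mono)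
              also have "\<dots> = (L * \<rho>) * \<delta>" by simp
              also have "\<dots> \<le> \<rho>' * \<delta>" using \<rho>'(2) \<delta> by (simp add: mult_right_mono)
              finally have le: "\<rho> * infdist (G z) Ucl \<le> \<rho>' * \<delta>" .
              show "h (\<rho> * infdist (G z) Ucl) \<le> h (\<rho>' * \<delta>)"
                by (rule mono_onD[OF hmono]) (use le True \<rho> \<rho>'(1) \<delta> in auto)
            qed (use CF1 in simp)
            finally show ?thesis .
          next
            case False
            hence "infdist (G z) Ucl = 0" using infdist_nonneg[of "G z" Ucl] by simp
            hence inU: "G z \<in> Ucl"
              using in_closed_iff_infdist_zero[OF compact_imp_closed[OF cUcl]] Gy by blast
            have "dbar F (G z) = 0"
            proof (rule dbar_zero[OF admh \<rho> _ dbar_cont[OF _ cDF] _ _ inU])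
              show "CF \<ge> 0" using CF1 by simp
              show "\<forall>w. (F has_derivative blinfun_apply (DF w)) (at w)" using DF by simp
              show "\<forall>w. 0 < infdist w Ucl \<longrightarrow> norm (dbar F w) \<le> CF * h (\<rho> * infdist w Ucl)" using CF by blast
              show "\<forall>y\<in>Ucl. \<forall>j. Im (y $ j) = 0" by (auto simp: Ucl_def)
            qed
            thus ?thesis using hpos[of "\<rho>' * \<delta>"] \<rho>'(1) \<delta> CF1 by simp
          qed
          thus ?thesis using Lp by (simp add: mult.assoc mult_left_mono)
        qed
        have comp: "norm (dbar H z $ i) \<le> (nn * L * CF + MB * CG) * K (\<rho>' * \<delta>)" for i
        proof -
          define P where "P = A z (axis i 1)"
          define Q where "Q = A z (axis i \<i>)"
          define Dg where "Dg = (\<chi> j. dbar (\<lambda>z. G z $ j) z $ i)"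
          have hg: "Q$j - \<i> * P$j = - 2 * \<i> * Dg$j" for j
            by (simp add: P_def Q_def Dg_def A_def dbar_formula[OF DG] algebra_simps)
          have dHi: "dbar H z $ i = (B P + \<i> * B Q) / 2"
            by (simp add: dH \<Phi>_def DHz B_def P_def Q_def)
          have "norm (dbar H z $ i) \<le> nn * norm P * norm (dbar F (G z)) + norm B * (\<Sum>j\<in>UNIV. norm (Dg$j))"
            unfolding dHi nn_def by (rule comp_bound[OF Df hg])
          also have "\<dots> \<le> nn * (L * CF * h (\<rho>' * \<delta>)) + MB * (CG * k (\<sigma> * \<delta>))"
          proof (rule add_mono)
            have nP: "norm P \<le> L"
            proof -
              have "norm P \<le> L * norm (axis i (1::complex) :: complex^'m)"
                unfolding P_def by (rule lip_deriv_bound[OF Gder lip])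
              also have "norm (axis i (1::complex) :: complex^'m) = 1"
                by (simp add: norm_axis_c)
              finally show ?thesis by simp
            qed
            have "norm P * norm (dbar F (G z)) \<le> L * norm (dbar F (G z))"
              by (rule mult_right_mono[OF nP]) simp
            also note LF
            finally show "nn * norm P * norm (dbar F (G z)) \<le> nn * (L * CF * h (\<rho>' * \<delta>))"
              by (simp add: nn_def mult.assoc mult_left_mono)
            have sg: "(\<Sum>j\<in>UNIV. norm (Dg$j)) \<le> CG * k (\<sigma> * \<delta>)"
            proof -
              have "(\<Sum>j\<in>UNIV. norm (Dg$j)) \<le> (\<Sum>j\<in>UNIV. CGj j * k (\<sigma> * \<delta>))"
              proof (rule sum_mono)
                fix j
                have "norm (Dg$j) \<le> norm (dbar (\<lambda>z. G z $ j) z)"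
                  unfolding Dg_def by (simp add: Finite_Cartesian_Product.norm_nth_le)
                also have "\<dots> \<le> CGj j * k (\<sigma> * \<delta>)" using CGj[OF dpos] by (simp add: \<delta>_def)
                finally show "norm (Dg$j) \<le> CGj j * k (\<sigma> * \<delta>)" .
              qed
              thus ?thesis by (simp add: CG_def sum_distrib_right)
            qed
            have "norm B \<le> MB" unfolding B_def by (rule MB[OF zs])
            thus "norm B * (\<Sum>j\<in>UNIV. norm (Dg$j)) \<le> MB * (CG * k (\<sigma> * \<delta>))"
              using sg MB0 by (meson mult_mono norm_ge_zero sum_nonneg)
          qed
          also have "\<dots> \<le> nn * (L * CF * K (\<rho>' * \<delta>)) + MB * (CG * K (\<rho>' * \<delta>))"
          proof (rule add_mono)
            have "h (\<rho>' * \<delta>) \<le> K (\<rho>' * \<delta>)" by (simp add: K_def)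
            thus "nn * (L * CF * h (\<rho>' * \<delta>)) \<le> nn * (L * CF * K (\<rho>' * \<delta>))"
              using L0 CF1 by (simp add: nn_def mult_left_mono)
            have "k (\<sigma> * \<delta>) \<le> k (\<rho>' * \<delta>)"
              by (rule mono_onD[OF kmono]) (use \<sigma> \<delta> \<rho>'(3) in \<open>auto intro: mult_right_mono\<close>)
            also have "\<dots> \<le> K (\<rho>' * \<delta>)" by (simp add: K_def)
            finally show "MB * (CG * k (\<sigma> * \<delta>)) \<le> MB * (CG * K (\<rho>' * \<delta>))"
              using MB0 CG0 by (simp add: mult_left_mono)
          qed
          also have "\<dots> = (nn * L * CF + MB * CG) * K (\<rho>' * \<delta>)" by (simp add: algebra_simps)
          finally show ?thesis .
        qed
        have "norm (dbar H z) \<le> (\<Sum>i\<in>UNIV. norm (dbar H z $ i))" by (rule norm_vec_le_sum)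
        also have "\<dots> \<le> (\<Sum>i\<in>(UNIV::'m set). (nn * L * CF + MB * CG) * K (\<rho>' * \<delta>))"
          by (rule sum_mono[OF comp])
        also have "\<dots> = (mm * (nn * L * CF + MB * CG)) * K (\<rho>' * \<delta>)" by (simp add: mm_def)
        also have "\<dots> \<le> C * K (\<rho>' * \<delta>)"
          by (rule mult_right_mono) (use KK in \<open>auto simp: C_def\<close>)
        finally show ?thesis by (simp add: \<delta>_def)
      qed
    qed
    moreover have "C \<ge> 1" by (simp add: C_def)
    ultimately show ?thesis unfolding K_def \<rho>'_def Vcl_def by blast
  qed
  show ?thesis unfolding has_almost_analytic_ext_def almost_analytic_ext_def
    using C1 Hext Bound by blast
qed


end
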